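(* Let $Y$ be a variable. For all positive integers $n$, $$\det_{0\le i,j\le n-1}\left(Y+2^{-2\lceil(i+j)/2\rceil}\binom{2\lceil(i+j)/2\rceil}{\lceil(i+j)/2\rceil}\right)=2^{-n(n-1)}(Yn+1).$$ *)

theory Defs
  imports "HOL-Computational_Algebra.Polynomial" "Jordan_Normal_Form.Determinant"
begin

definition hentry :: "nat \<Rightarrow> nat \<Rightarrow> rat poly" where
  "hentry i j = (let m = nat \<lceil>(of_nat (i + j) :: rat) / 2\<rceil> in
     [:0, 1:] + [: of_nat ((2 * m) choose m) / 2 ^ (2 * m) :])"

end

theory Submission
  imports Defs
begin

definition Nf :: "nat \<Rightarrow> nat \<Rightarrow> nat" where
  "Nf m k = (if k \<le> m then m choose ((m - k) div 2) else 0)"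

lemma Nf_rec0: "Nf (Suc m) 0 = Nf m 0 + Nf m 1"
proof -
  obtain t where "m = 2*t \<or> m = 2*t+1" by (intro that[of "m div 2"]) arith
  then show ?thesis
  proof
    assume m: "m = 2*t"
    show ?thesis
    proof (cases t)
      case 0 then show ?thesis using m by (simp add: Nf_def)
    next
      case (Suc s)
      have "Suc m div 2 = Suc s" "m div 2 = Suc s" "(m - 1) div 2 = s" using m Suc by auto
      then show ?thesis using m Suc by (simp add: Nf_def)
    qed
  next
    assume m: "m = 2*t+1"
    have a: "Suc m div 2 = Suc t" "m div 2 = t" "(m - 1) div 2 = t" using m by auto
    have "m choose Suc t = m choose t"
      using binomial_symmetric[of t m] m by (simp add: Suc_diff_le)
    then show ?thesis using a m by (simp add: Nf_def)
  qed
qed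

lemma Nf_rec: "Nf (Suc m) (Suc k) = Nf m k + Nf m (Suc (Suc k))"
proof (cases "k < m")
  case True
  then obtain s where s: "m - k = Suc s" by (metis Suc_diff_Suc)
  show ?thesis
  proof (cases s)
    case 0 then show ?thesis using s True by (simp add: Nf_def)
  next
    case (Suc s')
    obtain r where r: "(m - k) div 2 = Suc r" "(m - Suc (Suc k)) div 2 = r"
      using s Suc by (intro that[of "(s' + 2) div 2 - 1"]) auto
    have "Suc m - Suc k = m - k" "Suc (Suc k) \<le> m" using s Suc by auto
    then show ?thesis using r True s Suc by (simp add: Nf_def)
  qed
next
  case False
  then show ?thesis by (cases "k = m") (auto simp: Nf_def)
qed

definition Pf :: "nat \<Rightarrow> nat \<Rightarrow> rat" where
  "Pf i k = of_nat (Nf i k) / 2 ^ i"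

definition Jop :: "(nat \<Rightarrow> rat) \<Rightarrow> nat \<Rightarrow> rat" where
  "Jop f k = (if k = 0 then f 0 + f 1 else f (k - 1) + f (k + 1))"

lemma Pf_zero: "i < k \<Longrightarrow> Pf i k = 0"
  by (simp add: Pf_def Nf_def)

lemma Pf_0: "Pf 0 k = (if k = 0 then 1 else 0)"
  by (simp add: Pf_def Nf_def)

lemma Pf_diag: "Pf i i = 1 / 2 ^ i"
  by (simp add: Pf_def Nf_def)

lemma Pf_rec: "Pf (Suc i) k = Jop (Pf i) k / 2"
proof (cases k)
  case 0 then show ?thesis
    by (simp add: Pf_def Jop_def Nf_rec0 field_simps)
next
  case (Suc k') then show ?thesis
    by (simp add: Pf_def Jop_def Nf_rec field_simps)
qed

lemma Jop_adj: "(\<Sum>k<Suc K. Jop f k * g k) - (\<Sum>k<Suc K. f k * Jop g k)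
   = f (Suc K) * g K - f K * g (Suc K)"
proof (induction K)
  case 0 then show ?case by (simp add: Jop_def algebra_simps)
next
  case (Suc K)
  have "(\<Sum>k<Suc (Suc K). Jop f k * g k) - (\<Sum>k<Suc (Suc K). f k * Jop g k)
     = ((\<Sum>k<Suc K. Jop f k * g k) - (\<Sum>k<Suc K. f k * Jop g k))
       + (Jop f (Suc K) * g (Suc K) - f (Suc K) * Jop g (Suc K))"
    by simp
  also have "\<dots> = f (Suc (Suc K)) * g (Suc K) - f (Suc K) * g (Suc (Suc K))"
    unfolding Suc.IH by (simp add: Jop_def algebra_simps)
  finally show ?case .
qed

definition G :: "nat \<Rightarrow> nat \<Rightarrow> nat \<Rightarrow> rat" where
  "G K i j = (\<Sum>k<K. Pf i k * Pf j k)"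

lemma G_shift:
  assumes "Suc (Suc i) \<le> K"
  shows "G K (Suc i) j = G K i (Suc j)"
proof -
  obtain K' where K: "K = Suc K'" using assms by (cases K) auto
  have z: "Pf i (Suc K') = 0" "Pf i K' = 0" using assms K by (auto intro!: Pf_zero)
  have "G K (Suc i) j = (\<Sum>k<Suc K'. Jop (Pf i) k * Pf j k) / 2"
    unfolding G_def K Pf_rec sum_divide_distrib by (intro sum.cong) auto
  also have "(\<Sum>k<Suc K'. Jop (Pf i) k * Pf j k) = (\<Sum>k<Suc K'. Pf i k * Jop (Pf j) k)"
    using Jop_adj[of "Pf i" "Pf j" K'] z by simp
  also have "\<dots> / 2 = G K i (Suc j)"
    unfolding G_def K Pf_rec sum_divide_distrib by (intro sum.cong) auto
  finally show ?thesis .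
qed

lemma G_0: "1 \<le> K \<Longrightarrow> G K 0 j = Pf j 0"
proof -
  assume "1 \<le> K"
  have "\<And>k. Pf 0 k * Pf j k = (if k = 0 then Pf j k else 0)" by (simp add: Pf_0)
  then show ?thesis using \<open>1 \<le> K\<close> by (simp add: G_def)
qed

lemma G_diag: "i + j < K \<Longrightarrow> G K i j = Pf (i + j) 0"
proof (induction i arbitrary: j)
  case 0 then show ?case by (simp add: G_0)
next
  case (Suc i)
  have "G K (Suc i) j = G K i (Suc j)" using Suc.prems by (intro G_shift) auto
  also have "\<dots> = Pf (i + Suc j) 0" using Suc.prems by (intro Suc.IH) auto
  finally show ?case by simp
qed

lemma sum_Pf_ext: "(\<Sum>k<Suc i + d. Pf i k * h k) = (\<Sum>k<Suc i. Pf i k * h k)"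
  by (induction d) (simp_all add: Pf_zero)

lemma sum_Pf_ext': "i < K \<Longrightarrow> (\<Sum>k<K. Pf i k * h k) = (\<Sum>k<Suc i. Pf i k * h k)"
  using sum_Pf_ext[where i=i and d="K - Suc i" and h=h] by simp

lemma G_full: "i < K \<Longrightarrow> G K i j = Pf (i + j) 0"
proof -
  assume "i < K"
  then have "G K i j = G (i + j + 1) i j" unfolding G_def
    using sum_Pf_ext'[of i K "Pf j"] sum_Pf_ext'[of i "i+j+1" "Pf j"] by simp
  also have "\<dots> = Pf (i + j) 0" by (rule G_diag) simp
  finally show ?thesis .
qed

lemma rowsum: "i < K \<Longrightarrow> (\<Sum>k<K. Pf i k) = 1"
proof (induction i)
  case 0 then show ?case
    by (cases K) (simp_all add: Pf_0 sum.lessThan_Suc_shift del: lessThan_Suc)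
next
  case (Suc i)
  obtain K' where K: "K = Suc K'" using Suc.prems by (cases K) auto
  have z: "Pf i (Suc K') = 0" "Pf i K' = 0" using Suc.prems K by (auto intro!: Pf_zero)
  have "(\<Sum>k<K. Pf (Suc i) k) = (\<Sum>k<Suc K'. Jop (Pf i) k * (\<lambda>_. 1) k) / 2"
    unfolding K Pf_rec sum_divide_distrib by simp
  also have "(\<Sum>k<Suc K'. Jop (Pf i) k * (\<lambda>_. 1) k) = (\<Sum>k<Suc K'. Pf i k * Jop (\<lambda>_. 1) k)"
    using Jop_adj[of "Pf i" "\<lambda>_. 1" K'] z by simp
  also have "\<dots> = 2 * (\<Sum>k<K. Pf i k)"
    by (simp add: Jop_def K sum_distrib_left mult.commute)
  finally show ?case using Suc by simp
qed

lemma ceil_half: "nat \<lceil>(of_nat m :: rat) / 2\<rceil> = (m + 1) div 2"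
proof -
  obtain t where "m = 2*t \<or> m = 2*t+1" by (intro that[of "m div 2"]) arith
  then show ?thesis
  proof
    assume m: "m = 2*t"
    have "(of_nat m :: rat) / 2 = of_int (int t)" using m by simp
    then show ?thesis using m by simp
  next
    assume m: "m = 2*t+1"
    have "\<lceil>(of_nat m :: rat) / 2\<rceil> = int t + 1"
      unfolding ceiling_eq_iff using m by (simp add: field_simps)
    then show ?thesis using m by simp
  qed
qed

lemma Pf_col0: "Pf m 0 = of_nat ((2 * ((m+1) div 2)) choose ((m+1) div 2)) / 2 ^ (2 * ((m+1) div 2))"
proof -
  obtain t where "m = 2*t \<or> m = 2*t+1" by (intro that[of "m div 2"]) arith
  then show ?thesis
  proof
    assume m: "m = 2*t"
    then show ?thesis by (simp add: Pf_def Nf_def)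
  next
    assume m: "m = 2*t+1"
    have a: "(m+1) div 2 = Suc t" "m div 2 = t" using m by auto
    have sym: "m choose Suc t = m choose t"
      using binomial_symmetric[of t m] m by (simp add: Suc_diff_le)
    have "(2 * Suc t) choose Suc t = 2 * (m choose t)"
      using m sym by simp
    then show ?thesis using a m by (simp add: Pf_def Nf_def field_simps)
  qed
qed


definition Pm :: "nat \<Rightarrow> rat poly mat" where
  "Pm n = mat n n (\<lambda>(i,k). [:Pf i k:])"
definition Am :: "nat \<Rightarrow> rat poly mat" where
  "Am n = mat n n (\<lambda>(i,j). (if i = j then 1 else 0) + [:0,1:])"
definition Ei :: "nat \<Rightarrow> rat poly mat" where
  "Ei n = mat n n (\<lambda>(i,j). (if i = j then 1 else 0) + (if j = 0 \<and> i \<noteq> 0 then 1 else 0))"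
definition Um :: "nat \<Rightarrow> rat poly mat" where
  "Um n = mat n n (\<lambda>(i,j). if i = 0 \<and> j = 0 then 1 + of_nat n * [:0,1:]
      else if i = 0 then [:0,1:] else if i = j then 1 else 0)"

lemma PA: "Pm n * Am n = mat n n (\<lambda>(i,l). [:Pf i l:] + [:0,1:])"
proof (rule eq_matI)
  fix i l assume il: "i < dim_row (mat n n (\<lambda>(i,l). [:Pf i l:] + [:0,1:]))"
    "l < dim_col (mat n n (\<lambda>(i,l). [:Pf i l:] + [:0,1:]))"
  then have i: "i < n" and l: "l < n" by auto
  have "(Pm n * Am n) $$ (i, l) = (\<Sum>k\<in>{0..<n}. [:Pf i k:] * ((if k = l then 1 else 0) + [:0,1:]))"
    using i l by (simp add: Pm_def Am_def scalar_prod_def)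
  also have "\<dots> = (\<Sum>k\<in>{0..<n}. (if k = l then [:Pf i k:] else 0)) + (\<Sum>k\<in>{0..<n}. [:Pf i k:]) * [:0,1:]"
  proof -
    have "\<And>k. [:Pf i k:] * ((if k = l then 1 else 0) + [:0,1:]) = (if k = l then [:Pf i k:] else 0) + [:Pf i k:] * [:0,1:]"
      by (simp add: distrib_left)
    then show ?thesis by (simp only: sum.distrib sum_distrib_right)
  qed
  also have "(\<Sum>k\<in>{0..<n}. [:Pf i k:]) = 1"
    using rowsum[OF i] by (simp add: sum_to_poly atLeast0LessThan one_pCons)
  finally show "(Pm n * Am n) $$ (i, l) = mat n n (\<lambda>(i,l). [:Pf i l:] + [:0,1:]) $$ (i, l)"
    using i l by simp
qed (auto simp: Pm_def Am_def)

lemma PAP: "Pm n * Am n * transpose_mat (Pm n) = mat n n (\<lambda>(i, j). hentry i j)"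
proof (rule eq_matI)
  fix i j assume ij: "i < dim_row (mat n n (\<lambda>(i, j). hentry i j))"
    "j < dim_col (mat n n (\<lambda>(i, j). hentry i j))"
  then have i: "i < n" and j: "j < n" by auto
  have "(Pm n * Am n * transpose_mat (Pm n)) $$ (i, j)
     = (\<Sum>k\<in>{0..<n}. ([:Pf i k:] + [:0,1:]) * [:Pf j k:])"
    unfolding PA using i j by (simp add: Pm_def scalar_prod_def del: mult_pCons_left mult_pCons_right)
  also have "\<dots> = (\<Sum>k\<in>{0..<n}. [:Pf i k * Pf j k:]) + [:0,1:] * (\<Sum>k\<in>{0..<n}. [:Pf j k:])"
  proof -
    have "\<And>k. ([:Pf i k:] + [:0,1:]) * [:Pf j k:] = [:Pf i k * Pf j k:] + [:0,1:] * [:Pf j k:]"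
      by (simp add: distrib_right)
    then show ?thesis by (simp only: sum.distrib sum_distrib_left)
  qed
  also have "(\<Sum>k\<in>{0..<n}. [:Pf j k:]) = 1"
    using rowsum[OF j] by (simp add: sum_to_poly atLeast0LessThan one_pCons)
  also have "(\<Sum>k\<in>{0..<n}. [:Pf i k * Pf j k:]) = [:Pf (i + j) 0:]"
    using G_full[OF i, of j] by (simp add: sum_to_poly atLeast0LessThan G_def)
  finally have X: "(Pm n * Am n * transpose_mat (Pm n)) $$ (i, j) = [:Pf (i + j) 0:] + [:0,1:] * 1" .
  show "(Pm n * Am n * transpose_mat (Pm n)) $$ (i, j) = mat n n (\<lambda>(i, j). hentry i j) $$ (i, j)"
  proof -
    have "nat \<lceil>(of_nat i + of_nat j :: rat) / 2\<rceil> = Suc (i + j) div 2"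
      using ceil_half[of "i + j"] by simp
    then show ?thesis using i j X by (simp add: hentry_def Pf_col0 Let_def add.commute)
  qed
qed (auto simp: Pm_def Am_def)

lemma det_Pm: "det (Pm n) = (\<Prod>i = 0..<n. [:1 / 2 ^ i:])"
  by (subst det_lower_triangular[of n]) (auto simp: Pm_def prod_list_diag_prod Pf_zero Pf_diag)

lemma det_Ei: "det (Ei n) = 1"
  by (subst det_lower_triangular[of n]) (auto simp: Ei_def prod_list_diag_prod intro!: prod.neutral)

lemma det_Um: "1 \<le> n \<Longrightarrow> det (Um n) = 1 + of_nat n * [:0,1:]"
proof -
  assume n: "1 \<le> n"
  have "det (Um n) = (\<Prod>i = 0..<n. Um n $$ (i,i))"
    by (subst det_upper_triangular[of _ n]) (auto simp: Um_def prod_list_diag_prod)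
  also have "\<dots> = Um n $$ (0,0) * (\<Prod>i = 1..<n. Um n $$ (i,i))"
    using n by (simp add: prod.atLeast_Suc_lessThan)
  also have "(\<Prod>i = 1..<n. Um n $$ (i,i)) = 1"
    by (rule prod.neutral) (auto simp: Um_def)
  finally show ?thesis using n by (simp add: Um_def)
qed

lemma EU: "Ei n * Um n = Am n * Ei n"
proof (rule eq_matI)
  fix i k assume "i < dim_row (Am n * Ei n)" "k < dim_col (Am n * Ei n)"
  then have i: "i < n" and k: "k < n" by (auto simp: Am_def Ei_def)
  have lhs: "(Ei n * Um n) $$ (i, k) = (if k = 0 then 1 + of_nat n * [:0,1:] else (if i = k then 1 else 0) + [:0,1:])"
  proof -
    have "(Ei n * Um n) $$ (i, k) = (\<Sum>l\<in>{0..<n}. ((if i = l then 1 else 0) + (if l = 0 \<and> i \<noteq> 0 then 1 else 0)) * Um n $$ (l, k))"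
      using i k by (auto simp: Ei_def Um_def scalar_prod_def intro!: sum.cong)
    also have "\<dots> = (\<Sum>l\<in>{0..<n}. (if l = i then Um n $$ (l, k) else 0)) + (\<Sum>l\<in>{0..<n}. (if l = 0 then (if i \<noteq> 0 then Um n $$ (l, k) else 0) else 0))"
      by (simp only: sum.distrib[symmetric]) (rule sum.cong, auto)
    also have "\<dots> = Um n $$ (i, k) + (if i \<noteq> 0 then Um n $$ (0, k) else 0)"
      using i by simp
    finally show ?thesis using i k by (auto simp: Um_def)
  qed
  have gen: "(Am n * Ei n) $$ (i, k) = (\<Sum>l\<in>{0..<n}. ((if i = l then 1 else 0) + [:0,1:]) * ((if l = k then 1 else 0) + (if k = 0 \<and> l \<noteq> 0 then 1 else 0)))"
    using i k by (auto simp: Ei_def Am_def scalar_prod_def intro!: sum.cong)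
  have rhs: "(Am n * Ei n) $$ (i, k) = (if k = 0 then 1 + of_nat n * [:0,1:] else (if i = k then 1 else 0) + [:0,1:])"
  proof (cases "k = 0")
    case True
    have "(Am n * Ei n) $$ (i, k) = (\<Sum>l\<in>{0..<n}. (if l = i then 1 else 0) + [:0,1:])"
      unfolding gen using True by (intro sum.cong) auto
    also have "\<dots> = 1 + of_nat n * [:0,1:]"
      using i by (simp add: sum.distrib)
    finally show ?thesis using True by simp
  next
    case False
    have "(Am n * Ei n) $$ (i, k) = (\<Sum>l\<in>{0..<n}. (if l = k then (if i = k then 1 else 0) + [:0,1:] else 0))"
      unfolding gen using False by (intro sum.cong) auto
    also have "\<dots> = (if i = k then 1 else 0) + [:0,1:]"
      using k by simp
    finally show ?thesis using False by simp
  qed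
  show "(Ei n * Um n) $$ (i, k) = (Am n * Ei n) $$ (i, k)" using lhs rhs by simp
qed (auto simp: Ei_def Um_def Am_def)

lemma det_Am: "1 \<le> n \<Longrightarrow> det (Am n) = 1 + of_nat n * [:0,1:]"
proof -
  assume n: "1 \<le> n"
  have c: "Ei n \<in> carrier_mat n n" "Um n \<in> carrier_mat n n" "Am n \<in> carrier_mat n n"
    by (auto simp: Ei_def Um_def Am_def)
  have "det (Ei n * Um n) = det (Am n * Ei n)" by (simp add: EU)
  then show ?thesis using det_mult[OF c(1,2)] det_mult[OF c(3,1)] det_Ei det_Um[OF n] by simp
qed

lemma prod_pow2: "(\<Prod>i = 0..<n. [:1 / 2 ^ i :: rat:]) * (\<Prod>i = 0..<n. [:1 / 2 ^ i:]) = [:1 / 2 ^ (n * (n - 1)):]"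
proof (induction n)
  case 0 then show ?case by (simp add: one_pCons)
next
  case (Suc n)
  have e: "Suc n * (Suc n - 1) = n * (n - 1) + 2 * n" by (cases n) auto
  have "(\<Prod>i = 0..<Suc n. [:1 / 2 ^ i :: rat:]) * (\<Prod>i = 0..<Suc n. [:1 / 2 ^ i:])
     = ((\<Prod>i = 0..<n. [:1 / 2 ^ i :: rat:]) * (\<Prod>i = 0..<n. [:1 / 2 ^ i:])) * ([:1 / 2 ^ n:] * [:1 / 2 ^ n:])"
    by (simp add: algebra_simps)
  also have "\<dots> = [:1 / 2 ^ (Suc n * (Suc n - 1)):]"
    unfolding Suc.IH e by (simp add: power_add power_mult field_simps power2_eq_square)
  finally show ?case .
qed

theorem mainTheorem9:
  fixes n :: nat
  assumes "n \<ge> 1"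
  shows "det (mat n n (\<lambda>(i, j). hentry i j))
           = [: 1 / 2 ^ (n * (n - 1)) :] * ([:0, 1:] * of_nat n + 1)"
proof -
  have c: "Pm n \<in> carrier_mat n n" "Am n \<in> carrier_mat n n" "transpose_mat (Pm n) \<in> carrier_mat n n"
    by (auto simp: Pm_def Am_def)
  have "det (mat n n (\<lambda>(i, j). hentry i j)) = det (Pm n) * det (Am n) * det (Pm n)"
    unfolding PAP[symmetric]
    using det_mult[OF mult_carrier_mat[OF c(1,2)] c(3)] det_mult[OF c(1,2)] det_transpose[OF c(1)] by simp
  also have "\<dots> = [: 1 / 2 ^ (n * (n - 1)) :] * (1 + of_nat n * [:0,1:])"
    unfolding det_Am[OF assms] det_Pm prod_pow2[symmetric] by (simp add: algebra_simps)
  finally show ?thesis by (simp add: algebra_simps)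
qed

end
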